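(* Let $N\ge 1$, $Z=\{1,\dots,N\}$, and let $W=(w_{ij})\in\mathbb R^{N\times N}$ be a symmetric weight matrix with nonnegative entries and positive degrees $d_i=\sum_{j\in Z}w_{ij}$; put $D=\mathrm{diag}(d_i)$ and, for some $p\in\mathbb R$, $L=D^{-p}(D-W)D^{-p}$. For $\tau^2,\alpha>0$ let $C_\tau=\tau^{2\alpha}(L+\tau^2 I)^{-\alpha}=(c_{ij})$, with columns $\mathbf c_j=C_\tau\mathbf e_j$, where $\mathbf e_j$ is the $j$-th standard basis vector of $\mathbb R^N$. Let $Z'\subseteq Z$ and $y:Z'\to\{-1,+1\}$. Let $\psi$ be a probability density on $\mathbb R$ that is continuously differentiable, symmetric, strictly log-concave and has full support on $\mathbb R$, with CDF $\Psi$. Define $$\mathsf J(\mathbf u)=\tfrac12\langle \mathbf u,C_\tau^{-1}\mathbf u\rangle-\sum_{j\in Z'}\log\Psi(u_jy(j)),\qquad \mathbf u\in\mathbb R^N,$$ and $F_j(s)=\dfrac{y(j)\psi(sy(j))}{\Psi(sy(j))}$ for $j\in Z'$. Then: (i) $\mathsf J$ has a unique minimizer $\mathbf u^\ast\in\mathbb R^N$; (ii) $\mathbf u^\ast$ satisfies $C_\tau^{-1}\mathbf u^\ast=\sum_{j\in Z'}F_j(u^\ast_j)\mathbf e_j$; (iii) $\mathbf u^\ast=\sum_{j\in Z'}\breve a_j\mathbf c_j$ for some coefficients $\breve a_j\in\mathbb R$; (iv) a vector of the form $\mathbf u^\ast=\sum_{j\in Z'}\breve a_j\mathbf c_j$ solves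 the equation in (ii) if and only if the coefficients satisfy $\breve a_j=F_j\big(\sum_{k\in Z'}\breve a_kc_{jk}\big)$ for all $j\in Z'$.
   Context: $\langle\cdot,\cdot\rangle$ is the Euclidean inner product on $\mathbb R^N$. *)

theory Defs
  imports "HOL-Analysis.Analysis"
begin

definition diagm :: "('n::finite \<Rightarrow> real) \<Rightarrow> real^'n^'n" where
  "diagm f = (\<chi> i j. if i = j then f i else 0)"

text \<open>Used for symmetric positive definite A, where this is well defined.\<close>
definition mat_rpow :: "real^'n^'n \<Rightarrow> real \<Rightarrow> real^'n^'n" where
  "mat_rpow A s = (SOME B. \<exists>Q lam. orthogonal_matrix Q \<and>
      A = Q ** diagm lam ** transpose Q \<and>
      B = Q ** diagm (\<lambda>i. lam i powr s) ** transpose Q)"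

definition strictly_concave :: "(real \<Rightarrow> real) \<Rightarrow> bool" where
  "strictly_concave f \<longleftrightarrow> (\<forall>x y t. x \<noteq> y \<and> 0 < t \<and> t < 1 \<longrightarrow>
      (1 - t) * f x + t * f y < f ((1 - t) * x + t * y))"

definition cdf_of :: "(real \<Rightarrow> real) \<Rightarrow> real \<Rightarrow> real" where
  "cdf_of \<psi> x = integral {..x} \<psi>"

end

theory Submission
  imports Defs
begin

declare transpose_matrix_vector[simp del]

lemma sum_UNIV_single:
  fixes h :: "'n::finite \<Rightarrow> real"
  assumes "\<And>k. k \<noteq> i \<Longrightarrow> h k = 0"
  shows "sum h UNIV = h i"
proof -
  have "sum h UNIV = sum h {i}" by (rule sum.mono_neutral_right) (auto simp: assms)
  then show ?thesis by simp
qed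

lemma sym_inner:
  fixes A :: "real^'n^'n"
  assumes "transpose A = A"
  shows "(A *v x) \<bullet> y = x \<bullet> (A *v y)"
proof -
  have "A *v x = x v* A" using transpose_matrix_vector[of A x] assms by simp
  then show ?thesis by (simp add: dot_lmul_matrix)
qed

lemma inner_mat_left:
  fixes Q :: "real^'n^'n"
  shows "x \<bullet> (Q *v z) = (transpose Q *v x) \<bullet> z"
  using dot_lmul_matrix[of x Q z] transpose_matrix_vector[of Q x] by simp

lemma diagm_mult_vec: "(diagm f *v z) $ i = f i * z $ i"
proof -
  have "(diagm f *v z) $ i = (\<Sum>j\<in>UNIV. (if i = j then f i else 0) * z $ j)"
    unfolding diagm_def matrix_vector_mult_def by (simp cong: if_cong)
  also have "\<dots> = (if i = i then f i else 0) * z $ i" by (rule sum_UNIV_single) auto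
  finally show ?thesis by simp
qed

lemma inner_diagm: "x \<bullet> (diagm f *v z) = (\<Sum>i\<in>UNIV. f i * (x $ i) * (z $ i))"
  by (simp add: inner_vec_def diagm_mult_vec algebra_simps)

lemma quad_repr:
  fixes Q :: "real^'n^'n"
  shows "x \<bullet> ((Q ** diagm f ** transpose Q) *v y)
     = (\<Sum>i\<in>UNIV. f i * ((transpose Q *v x) $ i) * ((transpose Q *v y) $ i))"
proof -
  have "(Q ** diagm f ** transpose Q) *v y = Q *v (diagm f *v (transpose Q *v y))"
    by (simp add: matrix_vector_mul_assoc matrix_mul_assoc)
  then have "x \<bullet> ((Q ** diagm f ** transpose Q) *v y)
     = (transpose Q *v x) \<bullet> (diagm f *v (transpose Q *v y))"
    using inner_mat_left by metis
  then show ?thesis by (simp only: inner_diagm)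
qed

lemma transpose_diagm[simp]: "transpose (diagm f) = diagm f"
  by (simp add: transpose_def diagm_def vec_eq_iff)

lemma diagm_mult: "diagm f ** diagm g = diagm (\<lambda>i. f i * g i)"
proof -
  have "(\<Sum>k\<in>UNIV. (if i = k then f i else 0) * (if k = j then g k else 0))
     = (if i = j then f i * g i else 0)" for i j
    by (subst sum_UNIV_single[where i=i]) auto
  then show ?thesis unfolding diagm_def matrix_matrix_mult_def vec_eq_iff by (simp cong: if_cong)
qed

lemma diagm_one: "diagm (\<lambda>i. 1) = mat 1"
  by (simp add: diagm_def mat_def vec_eq_iff)

lemma scaleR_diagm: "c *\<^sub>R (Q ** diagm f ** transpose Q) = Q ** diagm (\<lambda>i. c * f i) ** transpose Q"
  by (simp add: vec_eq_iff matrix_matrix_mult_def diagm_def sum_distrib_left algebra_simps if_distrib cong: if_cong)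

lemma orth_inv:
  fixes Q :: "real^'n^'n"
  assumes "orthogonal_matrix Q"
  shows "transpose Q ** Q = mat 1" "Q ** transpose Q = mat 1"
  using assms by (auto simp: orthogonal_matrix_def)

lemma orth_norm:
  fixes Q :: "real^'n^'n"
  assumes "orthogonal_matrix Q"
  shows "(transpose Q *v u) \<bullet> (transpose Q *v u) = u \<bullet> u"
proof -
  have "(transpose Q *v u) \<bullet> (transpose Q *v u) = u \<bullet> (Q *v (transpose Q *v u))"
    by (simp only: inner_mat_left)
  also have "\<dots> = u \<bullet> u" using orth_inv[OF assms] by (simp add: matrix_vector_mul_assoc)
  finally show ?thesis .
qed

lemma spec_inverse:
  fixes Q :: "real^'n^'n"
  assumes "orthogonal_matrix Q" "\<forall>i. mu i \<noteq> 0"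
  shows "(Q ** diagm mu ** transpose Q) ** (Q ** diagm (\<lambda>i. 1 / mu i) ** transpose Q) = mat 1"
proof -
  have "(Q ** diagm mu ** transpose Q) ** (Q ** diagm (\<lambda>i. 1 / mu i) ** transpose Q)
      = Q ** diagm mu ** (transpose Q ** Q) ** diagm (\<lambda>i. 1 / mu i) ** transpose Q"
    by (simp add: matrix_mul_assoc)
  also have "\<dots> = Q ** (diagm mu ** diagm (\<lambda>i. 1 / mu i)) ** transpose Q"
    using orth_inv[OF assms(1)] by (simp add: matrix_mul_assoc)
  also have "diagm mu ** diagm (\<lambda>i. 1 / mu i) = mat 1"
    using assms(2) by (simp add: diagm_mult diagm_one[symmetric])
  finally show ?thesis using orth_inv[OF assms(1)] by simp
qed

lemma matrix_inv_eq:
  fixes A B :: "real^'n^'n"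
  assumes "A ** B = mat 1"
  shows "matrix_inv A = B"
proof -
  have BA: "B ** A = mat 1" using assms matrix_left_right_inverse by blast
  have "\<exists>A'. A ** A' = mat 1 \<and> A' ** A = mat 1" using assms BA by blast
  then have X: "A ** matrix_inv A = mat 1 \<and> matrix_inv A ** A = mat 1"
    unfolding matrix_inv_def by (rule someI_ex)
  have "matrix_inv A = matrix_inv A ** (A ** B)" using assms by simp
  also have "\<dots> = B" using X by (simp add: matrix_mul_assoc)
  finally show ?thesis .
qed

lemma quad_zero:
  fixes b c :: real
  assumes "\<And>t. 2*t*b + t^2*c \<le> 0"
  shows "b = 0"
proof -
  define k where "k = \<bar>c\<bar> + 1"
  have k: "k > 0" "2*k + c > 0" unfolding k_def by auto
  have "2*(b/k)*b + (b/k)^2*c \<le> 0" by (rule assms)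
  then have "(2*(b/k)*b + (b/k)^2*c) * k^2 \<le> 0" using k by (simp add: mult_nonpos_nonneg)
  also have "(2*(b/k)*b + (b/k)^2*c) * k^2 = b^2 * (2*k + c)" using k
    by (simp add: field_simps power2_eq_square)
  finally have "b^2 * (2*k + c) \<le> 0" .
  then have "b^2 \<le> 0" using k by (simp add: mult_le_0_iff)
  then show ?thesis by simp
qed

lemma cont_quad:
  fixes A :: "real^'n^'n"
  shows "continuous_on S (\<lambda>x. x \<bullet> (A *v x))"
proof -
  have "bounded_linear (\<lambda>x::real^'n. A *v x)"
    using matrix_vector_mul_linear linear_conv_bounded_linear by blast
  then have "continuous_on S (\<lambda>x::real^'n. A *v x)" by (rule linear_continuous_on)
  then show ?thesis by (intro continuous_intros)
qed

lemma eig_basis: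
  fixes A :: "real^'n^'n"
  assumes sym: "transpose A = A"
  shows "subspace S \<Longrightarrow> (\<forall>x\<in>S. A *v x \<in> S) \<Longrightarrow> \<exists>B. B \<subseteq> S \<and> pairwise orthogonal B \<and>
           (\<forall>b\<in>B. norm b = 1 \<and> (\<exists>l. A *v b = l *\<^sub>R b)) \<and> span B = S"
proof (induction "dim S" arbitrary: S rule: less_induct)
  case less
  have subS: "subspace S" and invS: "\<forall>x\<in>S. A *v x \<in> S" using less.prems by auto
  show ?case
  proof (cases "S = {0}")
    case True then show ?thesis by (intro exI[of _ "{}"]) auto
  next
    case False
    then obtain x0 where x0: "x0 \<in> S" "x0 \<noteq> 0" using subspace_0[OF subS] by auto
    let ?T = "S \<inter> sphere 0 1"
    have cT: "compact ?T" by (intro closed_Int_compact closed_subspace subS compact_sphere)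
    have "x0 /\<^sub>R norm x0 \<in> ?T" using x0 subS by (auto simp: subspace_scale)
    then have nT: "?T \<noteq> {}" by blast
    obtain v where vT: "v \<in> ?T" and vmax: "\<forall>x\<in>?T. x \<bullet> (A *v x) \<le> v \<bullet> (A *v v)"
      using continuous_attains_sup[OF cT nT cont_quad] by blast
    define l where "l = v \<bullet> (A *v v)"
    have vS: "v \<in> S" and nv: "norm v = 1" using vT by auto
    have vv: "v \<bullet> v = 1" using nv by (simp add: norm_eq_1)
    have bound: "x \<bullet> (A *v x) \<le> l * (x \<bullet> x)" if xS: "x \<in> S" for x
    proof (cases "x = 0")
      case True then show ?thesis by simp
    next
      case False
      define y where "y = x /\<^sub>R norm x"
      have "y \<in> ?T" using xS False subS by (auto simp: subspace_scale y_def)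
      then have "y \<bullet> (A *v y) \<le> l" using vmax l_def by auto
      moreover have "y \<bullet> (A *v y) = (x \<bullet> (A *v x)) / (norm x)^2"
        by (simp add: y_def matrix_vector_mult_scaleR power2_eq_square field_simps)
      moreover have "x \<bullet> x = (norm x)^2" by (simp add: power2_norm_eq_inner)
      moreover have "(norm x)^2 > 0" using False by simp
      ultimately show ?thesis by (simp add: divide_le_eq mult.commute)
    qed
    have orth: "w \<bullet> (A *v v) = 0" if wS: "w \<in> S" and wv: "w \<bullet> v = 0" for w
    proof (rule quad_zero)
      fix t :: real
      have xS: "v + t *\<^sub>R w \<in> S" using vS wS subS by (simp add: subspace_add subspace_scale)
      have s1: "v \<bullet> (A *v w) = w \<bullet> (A *v v)"
        using sym_inner[OF sym, of w v] by (simp add: inner_commute)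
      have e1: "(v + t *\<^sub>R w) \<bullet> (A *v (v + t *\<^sub>R w))
          = l + 2*t*(w \<bullet> (A *v v)) + t^2 * (w \<bullet> (A *v w))"
        by (simp add: l_def matrix_vector_right_distrib matrix_vector_mult_scaleR
            inner_add_left inner_add_right s1 power2_eq_square algebra_simps)
      have e2: "(v + t *\<^sub>R w) \<bullet> (v + t *\<^sub>R w) = 1 + t^2 * (w \<bullet> w)"
        using vv wv by (simp add: inner_add_left inner_add_right inner_commute power2_eq_square)
      show "2*t*(w \<bullet> (A *v v)) + t^2*(w \<bullet> (A *v w) - l * (w \<bullet> w)) \<le> 0"
      proof -
        have "l + 2*t*(w \<bullet> (A *v v)) + t^2 * (w \<bullet> (A *v w)) \<le> l * (1 + t^2 * (w \<bullet> w))"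
          using bound[OF xS] unfolding e1 e2 .
        then show ?thesis by (simp add: algebra_simps)
      qed
    qed
    have eig: "A *v v = l *\<^sub>R v"
    proof -
      define r where "r = A *v v - l *\<^sub>R v"
      have rS: "r \<in> S" unfolding r_def using invS vS subS by (simp add: subspace_diff subspace_scale)
      have c1: "(A *v v) \<bullet> v = l" unfolding l_def by (rule inner_commute)
      have rv: "r \<bullet> v = 0" unfolding r_def using vv c1
        by (simp add: inner_diff_left)
      have "r \<bullet> (A *v v) = 0" by (rule orth[OF rS rv])
      then have "r \<bullet> r = 0" using rv unfolding r_def
        by (simp add: inner_diff_right inner_diff_left r_def)
      then show ?thesis unfolding r_def by simp
    qed
    define S' where "S' = {x\<in>S. x \<bullet> v = 0}"
    have subS': "subspace S'" unfolding S'_def subspace_def using subS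
      by (auto simp: subspace_add subspace_scale subspace_0 inner_add_left)
    have invS': "\<forall>x\<in>S'. A *v x \<in> S'"
    proof
      fix x assume "x \<in> S'"
      then have "x \<in> S" "x \<bullet> v = 0" unfolding S'_def by auto
      moreover have "(A *v x) \<bullet> v = x \<bullet> (A *v v)" by (rule sym_inner[OF sym])
      ultimately show "A *v x \<in> S'" using invS eig unfolding S'_def by auto
    qed
    have "v \<notin> S'" using vv unfolding S'_def by auto
    then have "S' \<subset> S" using vS unfolding S'_def by blast
    moreover have "span S' = S'" "span S = S" using subS subS' by (metis span_eq_iff)+
    ultimately have "span S' \<subset> span S" by (simp only:)
    then have "dim S' < dim S" by (rule dim_psubset)
    then obtain B' where B': "B' \<subseteq> S'" "pairwise orthogonal B'"
      "\<forall>b\<in>B'. norm b = 1 \<and> (\<exists>l. A *v b = l *\<^sub>R b)" "span B' = S'"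
      using less.hyps subS' invS' by blast
    show ?thesis
    proof (intro exI[of _ "insert v B'"] conjI)
      show "insert v B' \<subseteq> S" using vS B'(1) unfolding S'_def by auto
      have "v \<notin> B'" using B'(1) vv unfolding S'_def by auto
      have "orthogonal v b" if "b \<in> B'" for b
        using B'(1) that unfolding S'_def orthogonal_def by (auto simp: inner_commute)
      then show "pairwise orthogonal (insert v B')"
        using B'(2) by (auto simp: pairwise_insert orthogonal_commute)
      show "\<forall>b\<in>insert v B'. norm b = 1 \<and> (\<exists>l. A *v b = l *\<^sub>R b)"
        using B'(3) nv eig by auto
      show "span (insert v B') = S"
      proof
        show "span (insert v B') \<subseteq> S"
          using \<open>insert v B' \<subseteq> S\<close> subS by (simp add: span_minimal)
        show "S \<subseteq> span (insert v B')"
        proof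
          fix x assume xS: "x \<in> S"
          have "x - (x \<bullet> v) *\<^sub>R v \<in> S'" unfolding S'_def using xS vS subS vv
            by (simp add: subspace_diff subspace_scale inner_diff_left)
          then have "x - (x \<bullet> v) *\<^sub>R v \<in> span (insert v B')"
            using B'(4) span_mono[of B' "insert v B'"] by auto
          moreover have "(x \<bullet> v) *\<^sub>R v \<in> span (insert v B')"
            by (simp add: span_base span_scale)
          ultimately have "(x - (x \<bullet> v) *\<^sub>R v) + (x \<bullet> v) *\<^sub>R v \<in> span (insert v B')"
            by (rule span_add)
          then show "x \<in> span (insert v B')" by simp
        qed
      qed
    qed
  qed
qed

lemma spectral:
  fixes A :: "real^'n^'n"
  assumes sym: "transpose A = A"
  shows "\<exists>Q lam. orthogonal_matrix Q \<and> A = Q ** diagm lam ** transpose Q"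
proof -
  obtain B where B: "pairwise orthogonal B" "\<forall>b\<in>B. norm b = 1 \<and> (\<exists>l. A *v b = l *\<^sub>R b)"
      "span B = UNIV"
    using eig_basis[OF sym, of UNIV] by auto
  have "0 \<notin> B" using B(2) by force
  then have indB: "independent B" using B(1) pairwise_orthogonal_independent by blast
  have finB: "finite B" using indB by (rule finiteI_independent)
  have "card B = dim (UNIV :: (real^'n) set)"
    using basis_card_eq_dim[of B UNIV] indB B(3) by auto
  then have "card B = card (UNIV :: 'n set)" by simp
  then obtain g where g: "bij_betw g (UNIV :: 'n set) B"
    using finite_same_card_bij[of "UNIV :: 'n set" B] finB by auto
  obtain lf where lf: "\<forall>b\<in>B. A *v b = lf b *\<^sub>R b" using B(2) by metis
  define lam where "lam i = lf (g i)" for i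
  define Q where "Q = (\<chi> r i. g i $ r)"
  have gB: "g i \<in> B" for i using g by (auto simp: bij_betw_def)
  have col: "column i Q = g i" for i by (simp add: Q_def column_def vec_eq_iff)
  have orthQ: "orthogonal_matrix Q"
    unfolding orthogonal_matrix_orthonormal_columns col
  proof (intro conjI allI impI)
    fix i show "norm (g i) = 1" using B(2) gB by auto
  next
    fix i j :: 'n assume "i \<noteq> j"
    then have "g i \<noteq> g j" using g by (auto simp: bij_betw_def inj_on_def)
    then show "orthogonal (g i) (g j)" using B(1) gB unfolding pairwise_def by blast
  qed
  have AQ: "A ** Q = Q ** diagm lam"
  proof -
    have "(A ** Q) $ r $ i = (Q ** diagm lam) $ r $ i" for r i
    proof -
      have "(A ** Q) $ r $ i = (A *v g i) $ r"
        by (simp add: Q_def matrix_matrix_mult_def matrix_vector_mult_def)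
      also have "\<dots> = lam i * g i $ r" using lf gB by (simp add: lam_def)
      also have "\<dots> = (\<Sum>k\<in>UNIV. g k $ r * (if k = i then lam k else 0))"
        by (subst sum_UNIV_single[where i=i]) auto
      also have "\<dots> = (Q ** diagm lam) $ r $ i"
        by (simp add: Q_def matrix_matrix_mult_def diagm_def)
      finally show ?thesis .
    qed
    then show ?thesis by (simp add: vec_eq_iff)
  qed
  have "A = A ** (Q ** transpose Q)" using orth_inv[OF orthQ] by simp
  also have "\<dots> = Q ** diagm lam ** transpose Q" by (simp add: matrix_mul_assoc AQ)
  finally show ?thesis using orthQ by blast
qed

lemma transpose_nth: "transpose A $ i $ j = A $ j $ i"
  by (simp add: transpose_def)

lemma transpose_add': "transpose (A + B) = transpose A + transpose (B :: real^'n^'n)"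
  by (simp add: vec_eq_iff transpose_nth)

lemma transpose_diff': "transpose (A - B) = transpose A - transpose (B :: real^'n^'n)"
  by (simp add: vec_eq_iff transpose_nth)

lemma laplacian_psd:
  fixes W :: "real^'n^'n"
  assumes sym: "transpose W = W" and nn: "\<forall>i j. W$i$j \<ge> 0"
  shows "z \<bullet> ((diagm (\<lambda>i. \<Sum>j\<in>UNIV. W$i$j) - W) *v z) \<ge> 0"
proof -
  have Wsym: "W$j$i = W$i$j" for i j using sym transpose_nth[of W i j] by simp
  have e1: "z \<bullet> (diagm (\<lambda>i. \<Sum>j\<in>UNIV. W$i$j) *v z) = (\<Sum>i\<in>UNIV. \<Sum>j\<in>UNIV. W$i$j * z$i * z$i)"
    by (simp add: inner_diagm sum_distrib_right)
  have e2: "z \<bullet> (W *v z) = (\<Sum>i\<in>UNIV. \<Sum>j\<in>UNIV. W$i$j * z$i * z$j)"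
    by (simp add: inner_vec_def matrix_vector_mult_def sum_distrib_left algebra_simps)
  have e3: "(\<Sum>i\<in>UNIV. \<Sum>j\<in>UNIV. W$i$j * z$j * z$j) = (\<Sum>i\<in>UNIV. \<Sum>j\<in>UNIV. W$i$j * z$i * z$i)"
    by (subst sum.swap) (simp add: Wsym)
  have "0 \<le> (\<Sum>i\<in>UNIV. \<Sum>j\<in>UNIV. W$i$j * (z$i - z$j)^2)"
    using nn by (intro sum_nonneg) auto
  also have "\<dots> = (\<Sum>i\<in>UNIV. \<Sum>j\<in>UNIV. W$i$j * z$i * z$i) - 2 * (\<Sum>i\<in>UNIV. \<Sum>j\<in>UNIV. W$i$j * z$i * z$j)
      + (\<Sum>i\<in>UNIV. \<Sum>j\<in>UNIV. W$i$j * z$j * z$j)"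
    by (simp add: power2_eq_square algebra_simps sum.distrib sum_subtractf sum_distrib_left)
  also have "\<dots> = 2 * (z \<bullet> ((diagm (\<lambda>i. \<Sum>j\<in>UNIV. W$i$j) - W) *v z))"
    by (simp add: e3 matrix_vector_mult_diff_rdistrib inner_diff_right e1 e2)
  finally show ?thesis by simp
qed

lemma A_props:
  fixes W :: "real^'n^'n"
  assumes sym: "transpose W = W" and nn: "\<forall>i j. W$i$j \<ge> 0"
  defines "M \<equiv> diagm (\<lambda>i. \<Sum>j\<in>UNIV. W$i$j) - W"
  shows "transpose (diagm f ** M ** diagm f + t *\<^sub>R mat 1) = diagm f ** M ** diagm f + t *\<^sub>R mat 1"
    and "x \<bullet> ((diagm f ** M ** diagm f + t *\<^sub>R mat 1) *v x) \<ge> t * (x \<bullet> x)"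
proof -
  have tM: "transpose M = M" unfolding M_def by (simp add: transpose_diff' sym)
  show "transpose (diagm f ** M ** diagm f + t *\<^sub>R mat 1) = diagm f ** M ** diagm f + t *\<^sub>R mat 1"
    by (simp add: transpose_add' transpose_scalar matrix_transpose_mul tM matrix_mul_assoc)
  have "x \<bullet> ((diagm f ** M ** diagm f) *v x) = (diagm f *v x) \<bullet> (M *v (diagm f *v x))"
  proof -
    have "(diagm f ** M ** diagm f) *v x = diagm f *v (M *v (diagm f *v x))"
      by (simp add: matrix_vector_mul_assoc matrix_mul_assoc)
    then show ?thesis using inner_mat_left[of x "diagm f"] by simp
  qed
  also have "\<dots> \<ge> 0" unfolding M_def by (rule laplacian_psd[OF sym nn])
  finally have "x \<bullet> ((diagm f ** M ** diagm f) *v x) \<ge> 0" .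
  moreover have "(t *\<^sub>R mat 1) *v x = t *\<^sub>R x"
    by (simp add: scaleR_matrix_vector_assoc[symmetric])
  ultimately show "x \<bullet> ((diagm f ** M ** diagm f + t *\<^sub>R mat 1) *v x) \<ge> t * (x \<bullet> x)"
    by (simp add: matrix_vector_mult_add_rdistrib inner_add_right)
qed

lemma eigen_lower:
  fixes Q :: "real^'n^'n"
  assumes orth: "orthogonal_matrix Q" and A: "A = Q ** diagm lam ** transpose Q"
    and pd: "\<And>x. x \<bullet> (A *v x) \<ge> c * (x \<bullet> x)"
  shows "lam i \<ge> c"
proof -
  define x where "x = Q *v axis i 1"
  have tx: "transpose Q *v x = axis i 1"
    unfolding x_def using orth_inv[OF orth] by (simp add: matrix_vector_mul_assoc)
  have "x \<bullet> (A *v x) = (\<Sum>k\<in>UNIV. lam k * (axis i 1 $ k) * (axis i 1 $ k :: real))"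
    unfolding A quad_repr tx ..
  also have "\<dots> = lam i" by (subst sum_UNIV_single[where i=i]) (auto simp: axis_def)
  finally have 1: "x \<bullet> (A *v x) = lam i" .
  have "x \<bullet> x = (transpose Q *v x) \<bullet> (transpose Q *v x)" using orth_norm[OF orth] by simp
  also have "\<dots> = 1" unfolding tx by (simp add: inner_axis_axis)
  finally show ?thesis using pd[of x] 1 by simp
qed

lemma sum_axis_comp:
  fixes x :: "'n::finite \<Rightarrow> real"
  shows "(\<Sum>j\<in>Z. x j *\<^sub>R axis j (1::real)) $ k = (if k \<in> Z then x k else 0)"
proof -
  have "(\<Sum>j\<in>Z. x j *\<^sub>R axis j (1::real)) $ k = (\<Sum>j\<in>Z. x j * (axis j 1 $ k))"
    by (simp add: sum_component)
  also have "\<dots> = (\<Sum>j\<in>Z. if j = k then x j else 0)"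
    by (rule sum.cong) (auto simp: axis_def)
  also have "\<dots> = (if k \<in> Z then x k else 0)" by (simp add: sum.delta')
  finally show ?thesis .
qed

lemma sum_axis_eq:
  fixes x z :: "'n::finite \<Rightarrow> real"
  shows "(\<Sum>j\<in>Z. x j *\<^sub>R axis j (1::real)) = (\<Sum>j\<in>Z. z j *\<^sub>R axis j (1::real))
     \<longleftrightarrow> (\<forall>j\<in>Z. x j = z j)"
proof
  assume H: "(\<Sum>j\<in>Z. x j *\<^sub>R axis j (1::real)) = (\<Sum>j\<in>Z. z j *\<^sub>R axis j (1::real))"
  show "\<forall>j\<in>Z. x j = z j"
  proof
    fix j assume "j \<in> Z"
    then show "x j = z j" using arg_cong[OF H, of "\<lambda>v. v $ j"] unfolding sum_axis_comp by simp
  qed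
next
  assume "\<forall>j\<in>Z. x j = z j"
  then show "(\<Sum>j\<in>Z. x j *\<^sub>R axis j (1::real)) = (\<Sum>j\<in>Z. z j *\<^sub>R axis j (1::real))"
    by (intro sum.cong) auto
qed

lemma C_sum:
  fixes C :: "real^'n^'n"
  shows "(\<Sum>j\<in>Z. a j *\<^sub>R (C *v axis j 1)) = C *v (\<Sum>j\<in>Z. a j *\<^sub>R axis j 1)"
  by (simp add: vec.sum matrix_vector_mult_scaleR)

lemma C_sum_comp:
  fixes C :: "real^'n^'n"
  shows "(\<Sum>j\<in>Z. a j *\<^sub>R (C *v axis j 1)) $ i = (\<Sum>k\<in>Z. a k * C $ i $ k)"
  by (simp add: sum_component matrix_vector_mult_basis column_def)

lemma main_opt:
  fixes Q :: "real^'n^'n" and mu :: "'n \<Rightarrow> real" and C :: "real^'n^'n"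
    and \<Psi> \<psi> :: "real \<Rightarrow> real" and y :: "'n \<Rightarrow> real" and Z' :: "'n set"
  assumes orth: "orthogonal_matrix Q" and mu: "\<forall>i. mu i > 0"
    and Cdef: "C = Q ** diagm mu ** transpose Q"
    and Pp: "\<And>x. \<Psi> x > 0" and P1: "\<And>x. \<Psi> x \<le> 1"
    and Pd: "\<And>x. (\<Psi> has_real_derivative \<psi> x) (at x)"
    and Pc: "convex_on UNIV (\<lambda>x. - ln (\<Psi> x))"
  shows "let Ci = matrix_inv C;
         J = (\<lambda>u::real^'n. (1/2) * (u \<bullet> (Ci *v u))
                 - (\<Sum>j\<in>Z'. ln (\<Psi> (u $ j * y j))));
         F = (\<lambda>j s. y j * \<psi> (s * y j) / \<Psi> (s * y j));
         e = (\<lambda>j::'n. axis j (1::real));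
         c = (\<lambda>j. C *v e j);
         ismin = (\<lambda>u. \<forall>v. J u \<le> J v)
     in (\<exists>!u. ismin u)
        \<and> (\<forall>u. ismin u \<longrightarrow> Ci *v u = (\<Sum>j\<in>Z'. F j (u $ j) *\<^sub>R e j))
        \<and> (\<forall>u. ismin u \<longrightarrow> (\<exists>a. u = (\<Sum>j\<in>Z'. a j *\<^sub>R c j)))
        \<and> (\<forall>a. (let u = (\<Sum>j\<in>Z'. a j *\<^sub>R c j) in
                 Ci *v u = (\<Sum>j\<in>Z'. F j (u $ j) *\<^sub>R e j))
               \<longleftrightarrow> (\<forall>j\<in>Z'. a j = F j (\<Sum>k\<in>Z'. a k * C $ j $ k)))"
proof -
  define Ci where "Ci = matrix_inv C"
  define J where "J = (\<lambda>u::real^'n. (1/2) * (u \<bullet> (Ci *v u)) - (\<Sum>j\<in>Z'. ln (\<Psi> (u $ j * y j))))"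
  define F where "F = (\<lambda>j s. y j * \<psi> (s * y j) / \<Psi> (s * y j))"
  define e where "e = (\<lambda>j::'n. axis j (1::real))"
  define c where "c = (\<lambda>j. C *v e j)"
  define ismin where "ismin = (\<lambda>u. \<forall>v. J u \<le> J v)"
  define nu where "nu i = 1 / mu i" for i
  have nu: "nu i > 0" for i using mu by (simp add: nu_def)
  have CCi: "C ** Ci = mat 1"
    unfolding Ci_def Cdef using matrix_inv_eq[OF spec_inverse[OF orth, of mu]] spec_inverse[OF orth, of mu] mu
    by (metis less_irrefl)
  have Ci: "Ci = Q ** diagm nu ** transpose Q"
    unfolding Ci_def Cdef nu_def using matrix_inv_eq[OF spec_inverse[OF orth, of mu]] mu
    by (metis less_irrefl)
  have CiC: "Ci ** C = mat 1" using CCi matrix_left_right_inverse by blast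
  have CiCv: "Ci *v (C *v w) = w" for w using CiC by (simp add: matrix_vector_mul_assoc)
  have CCiv: "C *v (Ci *v w) = w" for w using CCi by (simp add: matrix_vector_mul_assoc)
  define T where "T u = transpose Q *v u" for u
  have repr: "a \<bullet> (Ci *v b) = (\<Sum>i\<in>UNIV. nu i * (T a $ i) * (T b $ i))" for a b
    unfolding Ci T_def by (rule quad_repr)
  have Cisym: "a \<bullet> (Ci *v b) = b \<bullet> (Ci *v a)" for a b
    unfolding repr by (simp add: algebra_simps)
  define q where "q u = u \<bullet> (Ci *v u)" for u
  define m where "m = Min (range nu)"
  have m: "m > 0" "m \<le> nu i" for i
    unfolding m_def using nu by (auto intro: Min_le)
  have coer: "q u \<ge> m * (u \<bullet> u)" for u
  proof -
    have "m * (u \<bullet> u) = m * (T u \<bullet> T u)" unfolding T_def using orth_norm[OF orth] by simp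
    also have "\<dots> = (\<Sum>i\<in>UNIV. m * (T u $ i) * (T u $ i))"
      by (simp add: inner_vec_def sum_distrib_left algebra_simps)
    also have "\<dots> \<le> (\<Sum>i\<in>UNIV. nu i * (T u $ i) * (T u $ i))"
      using m by (intro sum_mono) (simp add: mult.assoc mult_right_mono)
    finally show ?thesis unfolding q_def repr .
  qed
  have Tadd: "T (a + b) = T a + T b" "T (a - b) = T a - T b" "T (r *\<^sub>R a) = r *\<^sub>R T a" for a b r
    unfolding T_def by (simp_all add: matrix_vector_right_distrib matrix_vector_mult_diff_distrib
        matrix_vector_mult_scaleR)
  have midq: "q ((1/2) *\<^sub>R (a + b)) = (q a + q b) / 2 - q (a - b) / 4" for a b
  proof -
    have "q ((1/2) *\<^sub>R (a + b)) = (\<Sum>i\<in>UNIV. ((nu i * (T a $ i) * (T a $ i) + nu i * (T b $ i) * (T b $ i)) / 2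
         - nu i * (T a $ i - T b $ i) * (T a $ i - T b $ i) / 4))"
      unfolding q_def repr Tadd by (intro sum.cong) (auto simp: field_simps)
    also have "\<dots> = (q a + q b) / 2 - q (a - b) / 4"
      unfolding q_def repr Tadd
      by (simp add: sum_subtractf sum.distrib sum_divide_distrib[symmetric] algebra_simps)
    finally show ?thesis .
  qed
  define \<phi> where "\<phi> s = - ln (\<Psi> s)" for s
  have phi0: "\<phi> s \<ge> 0" for s unfolding \<phi>_def using Pp[of s] P1[of s] by simp
  have phimid: "\<phi> ((a + b) / 2) \<le> (\<phi> a + \<phi> b) / 2" for a b
    using convex_onD[OF Pc, of "1/2" a b] unfolding \<phi>_def by (simp add: field_simps)
  have Jphi: "J u = q u / 2 + (\<Sum>j\<in>Z'. \<phi> (u $ j * y j))" for u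
    unfolding J_def q_def \<phi>_def by (simp add: sum_negf)
  have Jlow: "J u \<ge> m * (u \<bullet> u) / 2" for u
  proof -
    have "(\<Sum>j\<in>Z'. \<phi> (u $ j * y j)) \<ge> 0" using phi0 by (intro sum_nonneg) auto
    then show ?thesis using coer[of u] unfolding Jphi by simp
  qed
  have Jmid: "J ((1/2) *\<^sub>R (a + b)) \<le> (J a + J b) / 2 - q (a - b) / 8" for a b
  proof -
    have "(\<Sum>j\<in>Z'. \<phi> (((1/2) *\<^sub>R (a + b)) $ j * y j))
        \<le> (\<Sum>j\<in>Z'. (\<phi> (a $ j * y j) + \<phi> (b $ j * y j)) / 2)"
    proof (rule sum_mono)
      fix j
      have "((1/2) *\<^sub>R (a + b)) $ j * y j = (a $ j * y j + b $ j * y j) / 2"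
        by (simp add: algebra_simps)
      then show "\<phi> (((1/2) *\<^sub>R (a + b)) $ j * y j) \<le> (\<phi> (a $ j * y j) + \<phi> (b $ j * y j)) / 2"
        using phimid by simp
    qed
    then show ?thesis unfolding Jphi midq
      by (simp add: sum.distrib sum_divide_distrib[symmetric] field_simps)
  qed
  have PsiC: "continuous_on UNIV \<Psi>"
    using Pd by (intro continuous_at_imp_continuous_on) (auto intro: DERIV_isCont)
  have contJ: "continuous_on UNIV J"
  proof -
    have lnC: "continuous_on UNIV (\<lambda>u::real^'n. ln (\<Psi> (u $ j * y j)))" for j
    proof -
      have "continuous_on UNIV (\<lambda>u::real^'n. \<Psi> (u $ j * y j))"
        by (rule continuous_on_compose2[OF PsiC]) (auto intro!: continuous_intros)
      then show ?thesis using Pp by (intro continuous_intros) (auto simp: less_imp_neq[OF Pp, symmetric])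
    qed
    show ?thesis unfolding J_def
      by (intro continuous_on_diff continuous_on_mult_left continuous_on_sum lnC cont_quad)
  qed
  have ex: "\<exists>u. ismin u"
  proof -
    define R where "R = sqrt (2 * \<bar>J 0\<bar> / m)"
    have R: "m * R^2 / 2 = \<bar>J 0\<bar>" using m unfolding R_def by simp
    have R0: "R \<ge> 0" unfolding R_def using m by simp
    then have "cball (0::real^'n) R \<noteq> {}" by auto
    then obtain u0 where u0: "u0 \<in> cball 0 R" "\<forall>v\<in>cball 0 R. J u0 \<le> J v"
      using continuous_attains_inf[OF compact_cball _ continuous_on_subset[OF contJ subset_UNIV]]
      by blast
    have "J u0 \<le> J v" for v
    proof (cases "v \<in> cball 0 R")
      case True then show ?thesis using u0 by auto
    next
      case False
      then have "norm v > R" by simp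
      then have "R^2 < (norm v)^2" using R0 by (intro power_strict_mono) auto
      then have "m * R^2 / 2 < m * (norm v)^2 / 2" using m by simp
      also have "\<dots> = m * (v \<bullet> v) / 2" by (simp add: power2_norm_eq_inner)
      also have "\<dots> \<le> J v" by (rule Jlow)
      finally have "J 0 < J v" using R by simp
      moreover have "J u0 \<le> J 0" using u0 R0 by simp
      ultimately show ?thesis by simp
    qed
    then show ?thesis unfolding ismin_def by blast
  qed
  have uniq: "u = v" if "ismin u" "ismin v" for u v
  proof (rule ccontr)
    assume "u \<noteq> v"
    then have "u - v \<noteq> 0" by simp
    then have "q (u - v) > 0" using coer[of "u - v"] m
      by (smt (verit) inner_gt_zero_iff mult_pos_pos)
    moreover have "J u = J v" using that unfolding ismin_def by (meson order_antisym)
    moreover have "J u \<le> J ((1/2) *\<^sub>R (u + v))" using that unfolding ismin_def by blast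
    ultimately show False using Jmid[of u v] by simp
  qed
  have foc: "Ci *v u = (\<Sum>j\<in>Z'. F j (u $ j) *\<^sub>R e j)" if um: "ismin u" for u
  proof -
    have "(Ci *v u) $ k = (\<Sum>j\<in>Z'. F j (u $ j) *\<^sub>R e j) $ k" for k
    proof -
      define ek where "ek = e k"
      define f where "f t = J (u + t *\<^sub>R ek)" for t
      have fe: "f t = (1/2) * (q u + 2 * t * (ek \<bullet> (Ci *v u)) + t^2 * q ek)
                 - (\<Sum>j\<in>Z'. ln (\<Psi> ((u $ j + t * ek $ j) * y j)))" for t
      proof -
        have "(u + t *\<^sub>R ek) \<bullet> (Ci *v (u + t *\<^sub>R ek))
            = q u + t * (u \<bullet> (Ci *v ek)) + t * (ek \<bullet> (Ci *v u)) + t^2 * q ek"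
          unfolding q_def
          by (simp add: matrix_vector_right_distrib matrix_vector_mult_scaleR inner_add_left
              inner_add_right power2_eq_square algebra_simps)
        moreover have "u \<bullet> (Ci *v ek) = ek \<bullet> (Ci *v u)" by (rule Cisym)
        ultimately show ?thesis unfolding f_def J_def by (simp add: algebra_simps)
      qed
      have dj: "((\<lambda>t. ln (\<Psi> ((u $ j + t * ek $ j) * y j))) has_real_derivative
                  inverse (\<Psi> (u $ j * y j)) * (\<psi> (u $ j * y j) * (ek $ j * y j))) (at 0)" for j
      proof -
        have g: "((\<lambda>t. (u $ j + t * ek $ j) * y j) has_real_derivative ek $ j * y j) (at 0)"
          by (auto intro!: derivative_eq_intros)
        have "((\<lambda>t. \<Psi> ((u $ j + t * ek $ j) * y j)) has_real_derivative
                 \<psi> (u $ j * y j) * (ek $ j * y j)) (at 0)"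
          using DERIV_chain2[where f=\<Psi> and g="\<lambda>t. (u $ j + t * ek $ j) * y j" and x=0, OF Pd g]
          by simp
        then show ?thesis
          using DERIV_chain2[where f=ln and g="\<lambda>t. \<Psi> ((u $ j + t * ek $ j) * y j)" and x=0,
              OF DERIV_ln[OF Pp]] by simp
      qed
      have df: "(f has_real_derivative
           (ek \<bullet> (Ci *v u)) - (\<Sum>j\<in>Z'. inverse (\<Psi> (u $ j * y j)) * (\<psi> (u $ j * y j) * (ek $ j * y j)))) (at 0)"
      proof -
        have "((\<lambda>t. (1/2) * (q u + 2 * t * (ek \<bullet> (Ci *v u)) + t^2 * q ek)) has_real_derivative
                 ek \<bullet> (Ci *v u)) (at 0)"
          by (auto intro!: derivative_eq_intros)
        moreover have "((\<lambda>t. \<Sum>j\<in>Z'. ln (\<Psi> ((u $ j + t * ek $ j) * y j))) has_real_derivative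
             (\<Sum>j\<in>Z'. inverse (\<Psi> (u $ j * y j)) * (\<psi> (u $ j * y j) * (ek $ j * y j)))) (at 0)"
          by (rule DERIV_sum) (rule dj)
        ultimately show ?thesis unfolding fe[abs_def] by (rule DERIV_diff)
      qed
      have "\<forall>t. \<bar>0 - t\<bar> < 1 \<longrightarrow> f 0 \<le> f t" using um unfolding ismin_def f_def by simp
      then have z: "(ek \<bullet> (Ci *v u)) - (\<Sum>j\<in>Z'. inverse (\<Psi> (u $ j * y j)) * (\<psi> (u $ j * y j) * (ek $ j * y j))) = 0"
        by (intro DERIV_local_min[OF df, of 1]) auto
      have "(Ci *v u) $ k = (\<Sum>j\<in>Z'. inverse (\<Psi> (u $ j * y j)) * (\<psi> (u $ j * y j) * (ek $ j * y j)))"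
        using z unfolding ek_def e_def by (simp add: inner_axis')
      also have "\<dots> = (\<Sum>j\<in>Z'. F j (u $ j) * (e j $ k))"
        by (intro sum.cong) (auto simp: F_def ek_def e_def axis_def field_simps)
      also have "\<dots> = (\<Sum>j\<in>Z'. F j (u $ j) *\<^sub>R e j) $ k" by (simp add: sum_component)
      finally show ?thesis .
    qed
    then show ?thesis by (simp add: vec_eq_iff)
  qed
  have rep: "\<exists>a. u = (\<Sum>j\<in>Z'. a j *\<^sub>R c j)" if "ismin u" for u
  proof -
    have "u = C *v (Ci *v u)" by (simp add: CCiv)
    also have "\<dots> = C *v (\<Sum>j\<in>Z'. F j (u $ j) *\<^sub>R e j)" using foc[OF that] by simp
    also have "\<dots> = (\<Sum>j\<in>Z'. F j (u $ j) *\<^sub>R c j)" unfolding c_def e_def by (simp add: C_sum)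
    finally show ?thesis by (rule exI[where x="\<lambda>j. F j (u $ j)"])
  qed
  have iv: "(let u = (\<Sum>j\<in>Z'. a j *\<^sub>R c j) in Ci *v u = (\<Sum>j\<in>Z'. F j (u $ j) *\<^sub>R e j))
               \<longleftrightarrow> (\<forall>j\<in>Z'. a j = F j (\<Sum>k\<in>Z'. a k * C $ j $ k))" for a
  proof -
    define u where "u = (\<Sum>j\<in>Z'. a j *\<^sub>R c j)"
    have "Ci *v u = (\<Sum>j\<in>Z'. a j *\<^sub>R e j)"
      unfolding u_def c_def e_def C_sum CiCv ..
    moreover have "u $ j = (\<Sum>k\<in>Z'. a k * C $ j $ k)" for j
      unfolding u_def c_def e_def by (rule C_sum_comp)
    ultimately have "(let u = (\<Sum>j\<in>Z'. a j *\<^sub>R c j) in Ci *v u = (\<Sum>j\<in>Z'. F j (u $ j) *\<^sub>R e j))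
       \<longleftrightarrow> (\<Sum>j\<in>Z'. a j *\<^sub>R axis j (1::real)) = (\<Sum>j\<in>Z'. F j (\<Sum>k\<in>Z'. a k * C $ j $ k) *\<^sub>R axis j (1::real))"
      unfolding Let_def u_def[symmetric] e_def by simp
    then show ?thesis by (simp only: sum_axis_eq)
  qed
  have all: "(\<exists>!u. ismin u)
        \<and> (\<forall>u. ismin u \<longrightarrow> Ci *v u = (\<Sum>j\<in>Z'. F j (u $ j) *\<^sub>R e j))
        \<and> (\<forall>u. ismin u \<longrightarrow> (\<exists>a. u = (\<Sum>j\<in>Z'. a j *\<^sub>R c j)))
        \<and> (\<forall>a. (let u = (\<Sum>j\<in>Z'. a j *\<^sub>R c j) in
                 Ci *v u = (\<Sum>j\<in>Z'. F j (u $ j) *\<^sub>R e j))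
               \<longleftrightarrow> (\<forall>j\<in>Z'. a j = F j (\<Sum>k\<in>Z'. a k * C $ j $ k)))"
    using ex uniq foc rep iv by blast
  then show ?thesis unfolding ismin_def J_def F_def c_def e_def Ci_def Let_def .
qed

lemma concave_le:
  assumes sc: "strictly_concave g" and s: "0 \<le> s" "s \<le> 1"
  shows "(1 - s) * g p + s * g q \<le> g ((1 - s) * p + s * q)"
proof -
  consider "p = q" | "s = 0" | "s = 1" | "p \<noteq> q" "0 < s" "s < 1" using s by linarith
  then show ?thesis
  proof cases
    case 1 then show ?thesis by (simp add: algebra_simps)
  next
    case 2 then show ?thesis by simp
  next
    case 3 then show ?thesis by simp
  next
    case 4 then show ?thesis using sc unfolding strictly_concave_def by (simp add: less_imp_le)
  qed
qed

lemma concave_4pt: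
  assumes sc: "strictly_concave g"
    and "a \<le> b" "b \<le> d" "a \<le> c" "c \<le> d" "a + d = b + c"
  shows "g a + g d \<le> g b + g c"
proof (cases "a = d")
  case True
  then have "b = a" "c = a" using assms by auto
  then show ?thesis using True by simp
next
  case False
  then have ad: "a < d" using assms by simp
  define s where "s = (b - a) / (d - a)"
  have s: "0 \<le> s" "s \<le> 1" unfolding s_def using assms ad by (auto simp: divide_simps)
  have sd: "s * (d - a) = b - a" unfolding s_def using ad by simp
  have b: "b = (1 - s) * a + s * d" using sd by (simp add: algebra_simps)
  have c: "c = (1 - (1 - s)) * a + (1 - s) * d" using sd assms(6) by (simp add: algebra_simps)
  have 1: "(1 - s) * g a + s * g d \<le> g b" unfolding b by (rule concave_le[OF sc s])
  have 2: "(1 - (1 - s)) * g a + (1 - s) * g d \<le> g c" unfolding c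
    by (rule concave_le[OF sc]) (use s in auto)
  from 1 2 show ?thesis by (simp add: algebra_simps)
qed

locale dens =
  fixes \<psi> :: "real \<Rightarrow> real"
  assumes nn: "\<forall>x. \<psi> x \<ge> 0"
    and dens: "(\<psi> has_integral 1) UNIV"
    and C1: "\<psi> C1_differentiable_on UNIV"
    and pos: "\<forall>x. \<psi> x > 0"
    and lc: "strictly_concave (\<lambda>x. ln (\<psi> x))"
begin

lemma cont: "continuous_on S \<psi>"
  using C1_differentiable_imp_continuous_on[OF C1] continuous_on_subset by blast

lemma leb: "integrable lebesgue \<psi>"
proof -
  have "\<psi> absolutely_integrable_on UNIV"
    using dens nn by (intro nonnegative_absolutely_integrable_1) auto
  then show ?thesis unfolding set_integrable_def by (simp add: indicator_def)
qed

lemma leb_restr: "integrable lebesgue (\<lambda>t. if t \<in> {..x} then \<psi> t else 0)"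
proof -
  have "integrable lebesgue (\<lambda>t. indicator {..x} t *\<^sub>R \<psi> t)"
    by (rule integrable_mult_indicator[OF _ leb]) simp
  moreover have "(\<lambda>t. indicator {..x} t *\<^sub>R \<psi> t) = (\<lambda>t. if t \<in> {..x} then \<psi> t else 0)"
    by (auto simp: indicator_def fun_eq_iff)
  ultimately show ?thesis by (simp only:)
qed

lemma hasint: "(\<psi> has_integral cdf_of \<psi> x) {..x}"
proof -
  have "((\<lambda>t. if t \<in> {..x} then \<psi> t else 0) has_integral
         integral\<^sup>L lebesgue (\<lambda>t. if t \<in> {..x} then \<psi> t else 0)) UNIV"
    by (rule has_integral_integral_lebesgue[OF leb_restr])
  then have "(\<psi> has_integral integral\<^sup>L lebesgue (\<lambda>t. if t \<in> {..x} then \<psi> t else 0)) {..x}"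
    by (simp only: has_integral_restrict_UNIV)
  then have "\<psi> integrable_on {..x}" by (rule has_integral_integrable)
  then show ?thesis unfolding cdf_of_def by (rule integrable_integral)
qed

lemma shift: "((\<lambda>t. \<psi> (t + h)) has_integral cdf_of \<psi> (x + h)) {..x}"
proof -
  define g where "g t = (if t \<in> {..x + h} then \<psi> t else 0)" for t
  have ig: "integrable lebesgue g" unfolding g_def by (rule leb_restr)
  have ig2: "integrable lebesgue (\<lambda>s. g (h + 1 * s))"
    using lebesgue_integrable_real_affine_iff[of 1 g h] ig by simp
  have eq: "integral\<^sup>L lebesgue g = integral\<^sup>L lebesgue (\<lambda>s. g (h + 1 * s))"
    using lebesgue_integral_real_affine[of 1 g h] by simp
  have "((\<lambda>s. g (h + 1 * s)) has_integral integral\<^sup>L lebesgue g) UNIV"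
    unfolding eq by (rule has_integral_integral_lebesgue[OF ig2])
  moreover have "integral\<^sup>L lebesgue g = cdf_of \<psi> (x + h)"
    using has_integral_integral_lebesgue[OF ig] hasint[of "x+h"]
    unfolding g_def has_integral_restrict_UNIV by (metis has_integral_unique)
  moreover have "(\<lambda>s. g (h + 1 * s)) = (\<lambda>s. if s \<in> {..x} then \<psi> (s + h) else 0)"
    by (auto simp: g_def fun_eq_iff add.commute)
  ultimately show ?thesis using has_integral_restrict_UNIV by metis
qed

lemma le1: "cdf_of \<psi> x \<le> 1"
proof -
  have "integral {..x} \<psi> \<le> integral UNIV \<psi>"
    using hasint dens nn by (intro integral_subset_le) auto
  then show ?thesis using dens unfolding cdf_of_def by (simp add: integral_unique)
qed

lemma gt0: "cdf_of \<psi> x > 0"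
proof -
  obtain t0 where t0: "t0 \<in> {x-1..x}" "\<forall>t\<in>{x-1..x}. \<psi> t0 \<le> \<psi> t"
    using continuous_attains_inf[of "{x-1..x}" \<psi>] cont by auto
  have "integral {x-1..x} (\<lambda>t. \<psi> t0) \<le> integral {x-1..x} \<psi>"
    using t0 cont by (intro integral_le integrable_continuous_real) auto
  moreover have "integral {x-1..x} (\<lambda>t. \<psi> t0) = \<psi> t0" by simp
  moreover have "integral {x-1..x} \<psi> \<le> integral {..x} \<psi>"
    using hasint nn cont by (intro integral_subset_le integrable_continuous_real) auto
  ultimately show ?thesis using pos unfolding cdf_of_def by (metis less_le_trans)
qed

lemma additive:
  assumes "a \<le> b"
  shows "cdf_of \<psi> b = cdf_of \<psi> a + integral {a..b} \<psi>"
proof -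
  have "(\<psi> has_integral (cdf_of \<psi> a + integral {a..b} \<psi>)) ({..a} \<union> {a..b})"
  proof (rule has_integral_Un[OF hasint])
    show "(\<psi> has_integral integral {a..b} \<psi>) {a..b}"
      using cont by (intro integrable_integral integrable_continuous_real) auto
    have "{..a} \<inter> {a..b} = {a}" using assms by auto
    then show "negligible ({..a} \<inter> {a..b})" by simp
  qed
  moreover have "{..a} \<union> {a..b} = {..b}" using assms by auto
  ultimately show ?thesis using hasint[of b] by (metis has_integral_unique)
qed

lemma deriv: "(cdf_of \<psi> has_real_derivative \<psi> x) (at x)"
proof -
  have "((\<lambda>u. integral {x-1..u} \<psi>) has_real_derivative \<psi> x) (at x within {x-1..x+1})"
    using cont by (intro integral_has_real_derivative) auto
  moreover have "x \<in> interior {x-1..x+1}" by simp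
  ultimately have "((\<lambda>u. integral {x-1..u} \<psi>) has_real_derivative \<psi> x) (at x)"
    using at_within_interior by metis
  then have d: "((\<lambda>u. cdf_of \<psi> (x-1) + integral {x-1..u} \<psi>) has_real_derivative \<psi> x) (at x)"
    by (auto intro!: derivative_eq_intros)
  have e: "cdf_of \<psi> (x - 1) + integral {x - 1..z} \<psi> = cdf_of \<psi> z"
    if "z \<in> {x-1<..<x+1}" for z
  proof -
    have "x - 1 \<le> z" using that by simp
    then show ?thesis by (rule additive[symmetric])
  qed
  show ?thesis
    by (rule has_field_derivative_transform_within_open[OF d, where S="{x-1<..<x+1}"]) (auto simp: e)
qed

lemma ratio_mono:
  assumes "x \<le> x'"
  shows "cdf_of \<psi> x * \<psi> x' \<le> cdf_of \<psi> x' * \<psi> x"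
proof -
  define h where "h = x' - x"
  have pt: "\<psi> t * \<psi> x' \<le> \<psi> (t + h) * \<psi> x" if "t \<in> {..x}" for t
  proof -
    have "ln (\<psi> t) + ln (\<psi> x') \<le> ln (\<psi> (t + h)) + ln (\<psi> x)"
      using that assms by (intro concave_4pt[OF lc]) (auto simp: h_def)
    moreover have "ln (\<psi> t * \<psi> x') = ln (\<psi> t) + ln (\<psi> x')"
      using pos[rule_format, of t] pos[rule_format, of x'] by (simp add: ln_mult)
    moreover have "ln (\<psi> (t + h) * \<psi> x) = ln (\<psi> (t + h)) + ln (\<psi> x)"
      using pos[rule_format, of "t+h"] pos[rule_format, of x] by (simp add: ln_mult)
    ultimately have "ln (\<psi> t * \<psi> x') \<le> ln (\<psi> (t + h) * \<psi> x)" by simp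
    moreover have "\<psi> t * \<psi> x' > 0" "\<psi> (t + h) * \<psi> x > 0" using pos by simp_all
    ultimately show ?thesis using ln_le_cancel_iff by blast
  qed
  have "((\<lambda>t. \<psi> t * \<psi> x') has_integral cdf_of \<psi> x * \<psi> x') {..x}"
    by (intro has_integral_mult_left hasint)
  moreover have "((\<lambda>t. \<psi> (t + h) * \<psi> x) has_integral cdf_of \<psi> (x + h) * \<psi> x) {..x}"
    by (intro has_integral_mult_left shift)
  ultimately have "cdf_of \<psi> x * \<psi> x' \<le> cdf_of \<psi> (x + h) * \<psi> x"
    using pt by (rule has_integral_le)
  then show ?thesis by (simp add: h_def)
qed

lemma convex: "convex_on UNIV (\<lambda>x. - ln (cdf_of \<psi> x))"
proof (rule convex_on_realI)
  show "connected (UNIV :: real set)" by simp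
  fix x :: real
  show "((\<lambda>x. - ln (cdf_of \<psi> x)) has_real_derivative - (\<psi> x / cdf_of \<psi> x)) (at x)"
    using gt0[of x] by (auto intro!: derivative_eq_intros deriv simp: field_simps)
next
  fix x y :: real assume "x \<le> y"
  then have "cdf_of \<psi> x * \<psi> y \<le> cdf_of \<psi> y * \<psi> x" by (rule ratio_mono)
  then show "- (\<psi> x / cdf_of \<psi> x) \<le> - (\<psi> y / cdf_of \<psi> y)"
    using gt0[of x] gt0[of y] by (simp add: divide_simps mult.commute)
qed

end

theorem proposition2p4:
  fixes W :: "real^'n^'n" and p \<tau> \<alpha> :: real
    and Z' :: "'n set" and y :: "'n \<Rightarrow> real" and \<psi> :: "real \<Rightarrow> real"
  assumes W_sym: "transpose W = W"
    and W_nonneg: "\<forall>i j. W $ i $ j \<ge> 0"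
    and deg_pos: "\<forall>i. (\<Sum>j\<in>UNIV. W $ i $ j) > 0"
    and tau_pos: "\<tau>^2 > 0" and alpha_pos: "\<alpha> > 0"
    and y_sign: "\<forall>j\<in>Z'. y j = 1 \<or> y j = -1"
    and psi_nonneg: "\<forall>x. \<psi> x \<ge> 0"
    and psi_density: "(\<psi> has_integral 1) UNIV"
    and psi_C1: "\<psi> C1_differentiable_on UNIV"
    and psi_symm: "\<forall>x. \<psi> (- x) = \<psi> x"
    and psi_full_support: "\<forall>x. \<psi> x > 0"
    and psi_logconc: "strictly_concave (\<lambda>x. ln (\<psi> x))"
  shows
    "let d = (\<lambda>i. \<Sum>j\<in>UNIV. W $ i $ j);
         Dp = diagm (\<lambda>i. d i powr (- p));
         L = Dp ** (diagm d - W) ** Dp;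
         C = (\<tau>^2) powr \<alpha> *\<^sub>R mat_rpow (L + (\<tau>^2) *\<^sub>R mat 1) (- \<alpha>);
         Ci = matrix_inv C;
         \<Psi> = cdf_of \<psi>;
         J = (\<lambda>u::real^'n. (1/2) * (u \<bullet> (Ci *v u))
                 - (\<Sum>j\<in>Z'. ln (\<Psi> (u $ j * y j))));
         F = (\<lambda>j s. y j * \<psi> (s * y j) / \<Psi> (s * y j));
         e = (\<lambda>j::'n. axis j (1::real));
         c = (\<lambda>j. C *v e j);
         ismin = (\<lambda>u. \<forall>v. J u \<le> J v)
     in (\<exists>!u. ismin u)
        \<and> (\<forall>u. ismin u \<longrightarrow> Ci *v u = (\<Sum>j\<in>Z'. F j (u $ j) *\<^sub>R e j))
        \<and> (\<forall>u. ismin u \<longrightarrow> (\<exists>a. u = (\<Sum>j\<in>Z'. a j *\<^sub>R c j)))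
        \<and> (\<forall>a. (let u = (\<Sum>j\<in>Z'. a j *\<^sub>R c j) in
                 Ci *v u = (\<Sum>j\<in>Z'. F j (u $ j) *\<^sub>R e j))
               \<longleftrightarrow> (\<forall>j\<in>Z'. a j = F j (\<Sum>k\<in>Z'. a k * C $ j $ k)))"
proof -
  interpret dens \<psi> using psi_nonneg psi_density psi_C1 psi_full_support psi_logconc
    by unfold_locales auto
  define A where "A = diagm (\<lambda>i. (\<Sum>j\<in>UNIV. W $ i $ j) powr (- p)) ** (diagm (\<lambda>i. \<Sum>j\<in>UNIV. W $ i $ j) - W)
      ** diagm (\<lambda>i. (\<Sum>j\<in>UNIV. W $ i $ j) powr (- p)) + (\<tau>^2) *\<^sub>R mat 1"
  have Asym: "transpose A = A" unfolding A_def by (rule A_props(1)[OF W_sym W_nonneg])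
  have Apd: "x \<bullet> (A *v x) \<ge> \<tau>^2 * (x \<bullet> x)" for x
    unfolding A_def by (rule A_props(2)[OF W_sym W_nonneg])
  obtain Q0 lam0 where Q0: "orthogonal_matrix Q0" "A = Q0 ** diagm lam0 ** transpose Q0"
    using spectral[OF Asym] by blast
  have "\<exists>B. \<exists>Q lam. orthogonal_matrix Q \<and> A = Q ** diagm lam ** transpose Q \<and>
      B = Q ** diagm (\<lambda>i. lam i powr (- \<alpha>)) ** transpose Q"
    using Q0 by blast
  then have "\<exists>Q lam. orthogonal_matrix Q \<and> A = Q ** diagm lam ** transpose Q \<and>
      mat_rpow A (- \<alpha>) = Q ** diagm (\<lambda>i. lam i powr (- \<alpha>)) ** transpose Q"
    unfolding mat_rpow_def by (rule someI_ex)
  then obtain Q lam where Q: "orthogonal_matrix Q" "A = Q ** diagm lam ** transpose Q"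
      "mat_rpow A (- \<alpha>) = Q ** diagm (\<lambda>i. lam i powr (- \<alpha>)) ** transpose Q"
    by blast
  have lam: "lam i > 0" for i
    using eigen_lower[OF Q(1) Q(2) Apd, of i] tau_pos by linarith
  define mu where "mu i = (\<tau>^2) powr \<alpha> * lam i powr (- \<alpha>)" for i
  have mu: "\<forall>i. mu i > 0"
  proof
    fix i
    have "lam i \<noteq> 0" using lam[of i] by simp
    moreover have "\<tau>^2 \<noteq> 0" using tau_pos by simp
    ultimately show "mu i > 0" unfolding mu_def by (simp add: powr_gt_zero)
  qed
  have Ceq: "(\<tau>^2) powr \<alpha> *\<^sub>R mat_rpow A (- \<alpha>) = Q ** diagm mu ** transpose Q"
    unfolding Q(3) scaleR_diagm mu_def ..
  have "let Ci = matrix_inv ((\<tau>^2) powr \<alpha> *\<^sub>R mat_rpow A (- \<alpha>));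
         J = (\<lambda>u::real^'n. (1/2) * (u \<bullet> (Ci *v u))
                 - (\<Sum>j\<in>Z'. ln (cdf_of \<psi> (u $ j * y j))));
         F = (\<lambda>j s. y j * \<psi> (s * y j) / cdf_of \<psi> (s * y j));
         e = (\<lambda>j::'n. axis j (1::real));
         c = (\<lambda>j. ((\<tau>^2) powr \<alpha> *\<^sub>R mat_rpow A (- \<alpha>)) *v e j);
         ismin = (\<lambda>u. \<forall>v. J u \<le> J v)
     in (\<exists>!u. ismin u)
        \<and> (\<forall>u. ismin u \<longrightarrow> Ci *v u = (\<Sum>j\<in>Z'. F j (u $ j) *\<^sub>R e j))
        \<and> (\<forall>u. ismin u \<longrightarrow> (\<exists>a. u = (\<Sum>j\<in>Z'. a j *\<^sub>R c j)))
        \<and> (\<forall>a. (let u = (\<Sum>j\<in>Z'. a j *\<^sub>R c j) in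
                 Ci *v u = (\<Sum>j\<in>Z'. F j (u $ j) *\<^sub>R e j))
               \<longleftrightarrow> (\<forall>j\<in>Z'. a j = F j (\<Sum>k\<in>Z'. a k * ((\<tau>^2) powr \<alpha> *\<^sub>R mat_rpow A (- \<alpha>)) $ j $ k)))"
    by (rule main_opt[OF Q(1) mu Ceq gt0 le1 deriv convex])
  then show ?thesis unfolding A_def Let_def .
qed

end
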